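(* Let $\mu_0,\mu_1,\mu_2>0$, $k\ge4$ and $\boldsymbol{s}\in\mathbb{R}^n$. The canonical spline EMD cost function $\boldsymbol{c}_1[\boldsymbol{s}](\boldsymbol{a},\boldsymbol{\phi})=\big\|\mathbb{B}_k(\boldsymbol{s})-\mathbb{B}_k(\boldsymbol{a})\cdot\cos(\mathbb{B}_k(\boldsymbol{\phi}))\big\|_2^2$, defined on $\boldsymbol{\mathcal{S}}_{\mu_0,\mu_1,\mu_2}$, is not a convex function of $(\boldsymbol{a},\boldsymbol{\phi})$.
   Context: Spline setting: $k,\ell\in\mathbb{N}$, $k\le\ell-1$, knots $\tau_0<\dots<\tau_{\ell-1}$, $n=k+\ell-2$, extended knot vector $\delta_i=\tau_0$ ($0\le i\le k-1$), $\delta_i=\tau_{i-k+1}$ ($k\le i\le n-1$), $\delta_i=\tau_{\ell-1}$ ($n\le i\le n+k-1$); $B_{i,k}$ ($0\le i\le n-1$) are the B-splines of order $k$ on this extended knot vector (de Boor–Cox recursion, vanishing-denominator terms set to $0$), and $\mathbb{B}_k(\boldsymbol{x})=\sum_{i=0}^{n-1}x_iB_{i,k}$ for $\boldsymbol{x}\in\mathbb{R}^n$. $\|f\|_2^2=\int_{\tau_0}^{\tau_{\ell-1}}f(t)^2\,dt$. For $f,g$ on $[\tau_0,\tau_{\ell-1}]$, $f\preceq g$ means pointwise $\le$; $|f|$ is the pointwise absolute value. For $\mu_0,\mu_1,\mu_2>0$ and $k\ge4$, $\boldsymbol{\mathcal{S}}_{\mu_0,\mu_1,\mu_2}$ (intrinsic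 mode spline function souls) is the set of $(\boldsymbol{a},\boldsymbol{\phi})\in\mathbb{R}^n\times\mathbb{R}^n$ with $0\preceq\mathbb{B}_k(\boldsymbol{a})$, $\mu_0\preceq\mathbb{B}_k(\boldsymbol{\phi})'$, $|\mathbb{B}_k(\boldsymbol{a})'|\preceq\mu_1|\mathbb{B}_k(\boldsymbol{\phi})'|$, $|\mathbb{B}_k(\boldsymbol{\phi})''|\preceq\mu_2|\mathbb{B}_k(\boldsymbol{\phi})'|$. A function $F$ on a convex set $C\subseteq\mathbb{R}^m$ is convex iff $F(\lambda x+(1-\lambda)y)\le\lambda F(x)+(1-\lambda)F(y)$ for all $x,y\in C$, $\lambda\in[0,1]$. *)

theory Defs
  imports "HOL-Analysis.Analysis"
begin

definition ext_knot :: "nat \<Rightarrow> nat \<Rightarrow> (nat \<Rightarrow> real) \<Rightarrow> nat \<Rightarrow> real" where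
  "ext_knot k l \<tau> i =
     (if i \<le> k - 1 then \<tau> 0
      else if i \<le> k + l - 3 then \<tau> (i - k + 1)
      else \<tau> (l - 1))"

text \<open>B-splines by the de Boor--Cox recursion on a knot vector d; b is the right end
  of the parameter interval (order-1 splines are indicators of [d i, d (i+1)), except that
  the last nondegenerate interval ending at b is closed, the standard convention).
  Terms with vanishing denominator are 0 (note x / 0 = 0 in Isabelle).\<close>
fun bspline :: "(nat \<Rightarrow> real) \<Rightarrow> real \<Rightarrow> nat \<Rightarrow> nat \<Rightarrow> real \<Rightarrow> real" where
  "bspline d b i 0 t = 0"
| "bspline d b i (Suc 0) t =
     (if d i \<le> t \<and> (t < d (Suc i) \<or> (t = b \<and> d (Suc i) = b \<and> d i < d (Suc i))) then 1 else 0)"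
| "bspline d b i (Suc (Suc m)) t =
     (if d (i + Suc m) = d i then 0
      else (t - d i) / (d (i + Suc m) - d i) * bspline d b i (Suc m) t)
   + (if d (i + Suc (Suc m)) = d (Suc i) then 0
      else (d (i + Suc (Suc m)) - t) / (d (i + Suc (Suc m)) - d (Suc i)) * bspline d b (Suc i) (Suc m) t)"

definition spline :: "nat \<Rightarrow> nat \<Rightarrow> (nat \<Rightarrow> real) \<Rightarrow> (nat \<Rightarrow> real) \<Rightarrow> real \<Rightarrow> real" where
  "spline k l \<tau> x t = (\<Sum>i < k + l - 2. x i * bspline (ext_knot k l \<tau>) (\<tau> (l - 1)) i k t)"

text \<open>Vectors in R^n are represented as functions nat \<Rightarrow> real vanishing from index n on.\<close>
definition Rn :: "nat \<Rightarrow> (nat \<Rightarrow> real) set" where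
  "Rn n = {x. \<forall>i \<ge> n. x i = 0}"

text \<open>Intrinsic mode spline function souls S_{mu0,mu1,mu2}; derivatives are taken on the
  closed interval [tau_0, tau_(l-1)] (one-sided at the end points).\<close>
definition souls :: "nat \<Rightarrow> nat \<Rightarrow> (nat \<Rightarrow> real) \<Rightarrow> real \<Rightarrow> real \<Rightarrow> real
    \<Rightarrow> ((nat \<Rightarrow> real) \<times> (nat \<Rightarrow> real)) set" where
  "souls k l \<tau> \<mu>0 \<mu>1 \<mu>2 =
     {(a, \<phi>). a \<in> Rn (k + l - 2) \<and> \<phi> \<in> Rn (k + l - 2) \<and>
       (let I = {\<tau> 0 .. \<tau> (l - 1)}; A = spline k l \<tau> a; P = spline k l \<tau> \<phi> in
        \<exists>dA dP ddP. \<forall>t\<in>I.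
          (A has_real_derivative dA t) (at t within I) \<and>
          (P has_real_derivative dP t) (at t within I) \<and>
          (dP has_real_derivative ddP t) (at t within I) \<and>
          0 \<le> A t \<and> \<mu>0 \<le> dP t \<and>
          \<bar>dA t\<bar> \<le> \<mu>1 * \<bar>dP t\<bar> \<and> \<bar>ddP t\<bar> \<le> \<mu>2 * \<bar>dP t\<bar>)}"

definition emd_cost :: "nat \<Rightarrow> nat \<Rightarrow> (nat \<Rightarrow> real) \<Rightarrow> (nat \<Rightarrow> real)
    \<Rightarrow> (nat \<Rightarrow> real) \<times> (nat \<Rightarrow> real) \<Rightarrow> real" where
  "emd_cost k l \<tau> s ap =
     integral {\<tau> 0 .. \<tau> (l - 1)}
       (\<lambda>t. (spline k l \<tau> s t - spline k l \<tau> (fst ap) t * cos (spline k l \<tau> (snd ap) t))\<^sup>2)"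

definition pcomb :: "real \<Rightarrow> (nat \<Rightarrow> real) \<times> (nat \<Rightarrow> real) \<Rightarrow> (nat \<Rightarrow> real) \<times> (nat \<Rightarrow> real)
    \<Rightarrow> (nat \<Rightarrow> real) \<times> (nat \<Rightarrow> real)" where
  "pcomb c x y = ((\<lambda>i. c * fst x i + (1 - c) * fst y i), (\<lambda>i. c * snd x i + (1 - c) * snd y i))"

definition convex_fun :: "((nat \<Rightarrow> real) \<times> (nat \<Rightarrow> real)) set
    \<Rightarrow> ((nat \<Rightarrow> real) \<times> (nat \<Rightarrow> real) \<Rightarrow> real) \<Rightarrow> bool" where
  "convex_fun C F \<longleftrightarrow> (\<forall>x\<in>C. \<forall>y\<in>C. \<forall>c::real. 0 \<le> c \<and> c \<le> 1 \<longrightarrow>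
      F (pcomb c x y) \<le> c * F x + (1 - c) * F y)"

end

theory Submission imports Defs begin

lemma bs_supp:
  assumes "mono d" "bspline d b i m t \<noteq> 0"
  shows "d i \<le> t \<and> t \<le> d (i+m) \<and> d i < d (i+m)"
  using assms(2)
proof (induction m arbitrary: i)
  case 0 then show ?case by simp
next
  case (Suc m)
  show ?case
  proof (cases m)
    case 0 then show ?thesis using Suc.prems by (auto split: if_splits)
  next
    case (Suc m')
    have m1: "d (i + Suc m') \<le> d (i + Suc (Suc m'))" "d i \<le> d (Suc i)"
      by (auto intro!: monoD[OF assms(1)])
    from Suc.prems have "(d (i + Suc m') \<noteq> d i \<and> bspline d b i (Suc m') t \<noteq> 0) \<or>
       (d (i + Suc (Suc m')) \<noteq> d (Suc i) \<and> bspline d b (Suc i) (Suc m') t \<noteq> 0)"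
      unfolding Suc by (auto split: if_splits)
    then show ?thesis
    proof
      assume h: "d (i + Suc m') \<noteq> d i \<and> bspline d b i (Suc m') t \<noteq> 0"
      then show ?thesis using Suc.IH[of i] m1 h unfolding Suc by auto
    next
      assume h: "d (i + Suc (Suc m')) \<noteq> d (Suc i) \<and> bspline d b (Suc i) (Suc m') t \<noteq> 0"
      then show ?thesis using Suc.IH[of "Suc i"] m1 h unfolding Suc by auto
    qed
  qed
qed

lemma bs_bound:
  assumes "mono d"
  shows "\<bar>bspline d b i m t\<bar> \<le> 2 ^ m"
proof (induction m arbitrary: i)
  case 0 then show ?case by simp
next
  case (Suc m)
  show ?case
  proof (cases m)
    case 0 then show ?thesis by (auto split: if_splits)
  next
    case (Suc m')
    define W where "W = (if d (i + Suc m') = d i then 0 else (t - d i) / (d (i + Suc m') - d i))"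
    define V where "V = (if d (i + Suc (Suc m')) = d (Suc i) then 0
      else (d (i + Suc (Suc m')) - t) / (d (i + Suc (Suc m')) - d (Suc i)))"
    have e: "bspline d b i (Suc m) t = W * bspline d b i m t + V * bspline d b (Suc i) m t"
      unfolding Suc W_def V_def by simp
    have 1: "\<bar>W * bspline d b i m t\<bar> \<le> 2 ^ m"
    proof (cases "bspline d b i m t = 0")
      case False
      from bs_supp[OF assms False] have "0 \<le> W \<and> W \<le> 1" unfolding W_def Suc
        by (auto simp: divide_simps)
      then have "\<bar>W * bspline d b i m t\<bar> \<le> \<bar>bspline d b i m t\<bar>"
        by (simp add: abs_mult mult_left_le_one_le)
      then show ?thesis using Suc.IH[of i] by linarith
    qed simp
    have 2: "\<bar>V * bspline d b (Suc i) m t\<bar> \<le> 2 ^ m"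
    proof (cases "bspline d b (Suc i) m t = 0")
      case False
      from bs_supp[OF assms False] have "0 \<le> V \<and> V \<le> 1" unfolding V_def Suc
        by (auto simp: divide_simps)
      then have "\<bar>V * bspline d b (Suc i) m t\<bar> \<le> \<bar>bspline d b (Suc i) m t\<bar>"
        by (simp add: abs_mult mult_left_le_one_le)
      then show ?thesis using Suc.IH[of "Suc i"] by linarith
    qed simp
    show ?thesis unfolding e using 1 2 by simp
  qed
qed

lemma bs_meas: "bspline d b i m \<in> borel_measurable borel"
proof (induction m arbitrary: i)
  case 0 then show ?case by simp
next
  case (Suc m)
  show ?case
  proof (cases m)
    case 0 then show ?thesis by simp measurable
  next
    case (Suc m')
    have "bspline d b i (Suc m) = (\<lambda>t. (if d (i + Suc m') = d i then 0 else (t - d i) / (d (i + Suc m') - d i)) * bspline d b i m t + (if d (i + Suc (Suc m')) = d (Suc i) then 0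
      else (d (i + Suc (Suc m')) - t) / (d (i + Suc (Suc m')) - d (Suc i))) * bspline d b (Suc i) m t)"
      unfolding Suc by (rule ext) simp
    then show ?thesis using Suc.IH by simp
  qed
qed

definition WW :: "(nat \<Rightarrow> real) \<Rightarrow> nat \<Rightarrow> nat \<Rightarrow> real \<Rightarrow> real" where
  "WW d m i t = (if d (i + Suc m) = d i then 0 else (t - d i) / (d (i + Suc m) - d i))"
definition VV :: "(nat \<Rightarrow> real) \<Rightarrow> nat \<Rightarrow> nat \<Rightarrow> real \<Rightarrow> real" where
  "VV d m i t = (if d (i + Suc m) = d i then 0 else (d (i + Suc m) - t) / (d (i + Suc m) - d i))"

lemma wv_aux: "(D::real) \<noteq> a \<Longrightarrow> (t - a) / (D - a) + (D - t) / (D - a) = 1"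
  by (simp add: add_divide_distrib[symmetric])

lemma bs_shift:
  "(\<Sum>i<N. c i * bspline d b i (Suc (Suc m)) t) =
   (\<Sum>i<Suc N. ((if i < N then c i * WW d m i t else 0) + (if 0 < i then c (i - 1) * VV d m i t else 0))
        * bspline d b i (Suc m) t)"
proof -
  have "(\<Sum>i<Suc N. ((if i < N then c i * WW d m i t else 0) + (if 0 < i then c (i - 1) * VV d m i t else 0))
        * bspline d b i (Suc m) t) =
     (\<Sum>i<Suc N. (if i < N then c i * WW d m i t else 0) * bspline d b i (Suc m) t) +
     (\<Sum>i<Suc N. (if 0 < i then c (i - 1) * VV d m i t else 0) * bspline d b i (Suc m) t)"
    by (simp add: sum.distrib distrib_right)
  also have "(\<Sum>i<Suc N. (if i < N then c i * WW d m i t else 0) * bspline d b i (Suc m) t)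
     = (\<Sum>i<N. c i * WW d m i t * bspline d b i (Suc m) t)"
    by simp
  also have "(\<Sum>i<Suc N. (if 0 < i then c (i - 1) * VV d m i t else 0) * bspline d b i (Suc m) t)
     = (\<Sum>i<N. c i * VV d m (Suc i) t * bspline d b (Suc i) (Suc m) t)"
    by (subst sum.lessThan_Suc_shift) simp
  also have "(\<Sum>i<N. c i * WW d m i t * bspline d b i (Suc m) t) + (\<Sum>i<N. c i * VV d m (Suc i) t * bspline d b (Suc i) (Suc m) t) = (\<Sum>i<N. c i * bspline d b i (Suc (Suc m)) t)"
    unfolding sum.distrib[symmetric] by (intro sum.cong refl) (simp add: WW_def VV_def algebra_simps)
  finally show ?thesis by simp
qed

lemma tele1: "mono (d::nat\<Rightarrow>real) \<Longrightarrow> (\<Sum>i<M. (if d i \<le> t \<and> t < d (Suc i) then 1 else 0::real)) =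
   (if d 0 \<le> t \<and> t < d M then 1 else 0)"
proof (induction M)
  case (Suc M)
  have "d 0 \<le> d M" "d M \<le> d (Suc M)" by (auto intro!: monoD[OF Suc.prems])
  then show ?case using Suc by (auto simp: not_le not_less)
qed auto

lemma tele2: "mono (d::nat\<Rightarrow>real) \<Longrightarrow> (\<Sum>i<M. (if d i < t \<and> t \<le> d (Suc i) then 1 else 0::real)) =
   (if d 0 < t \<and> t \<le> d M then 1 else 0)"
proof (induction M)
  case (Suc M)
  have "d 0 \<le> d M" "d M \<le> d (Suc M)" by (auto intro!: monoD[OF Suc.prems])
  then show ?case using Suc by (auto simp: not_le not_less)
qed auto

lemma bs_part1:
  assumes "mono d" "d 0 < b" "d N = b" "d 0 \<le> t" "t \<le> d N"
  shows "(\<Sum>i<N. bspline d b i (Suc 0) t) = 1"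
proof (cases "t < b")
  case True
  have "(\<Sum>i<N. bspline d b i (Suc 0) t) = (\<Sum>i<N. (if d i \<le> t \<and> t < d (Suc i) then 1 else 0::real))"
    using True by (intro sum.cong) auto
  then show ?thesis using tele1[OF assms(1), of t N] True assms by simp
next
  case False
  then have tb: "t = b" using assms by simp
  have "(\<Sum>i<N. bspline d b i (Suc 0) t) = (\<Sum>i<N. (if d i < t \<and> t \<le> d (Suc i) then 1 else 0::real))"
  proof (intro sum.cong refl)
    fix i assume "i \<in> {..<N}"
    then have "d (Suc i) \<le> d N" by (auto intro!: monoD[OF assms(1)])
    then show "bspline d b i (Suc 0) t = (if d i < t \<and> t \<le> d (Suc i) then 1 else 0)"
      using tb assms(3) by auto
  qed
  then show ?thesis using tele2[OF assms(1), of t N] tb assms by simp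
qed

lemma bs_part:
  assumes "mono d" "d 0 < b" "d (N + m) = b" "d m \<le> t" "t \<le> d N"
  shows "(\<Sum>i<N. bspline d b i (Suc m) t) = 1"
  using assms(3-5)
proof (induction m arbitrary: N)
  case 0
  have "d 0 \<le> t" using 0 by simp
  then show ?case using bs_part1[OF assms(1,2)] 0 by simp
next
  case (Suc m)
  have IH: "(\<Sum>i<Suc N. bspline d b i (Suc m) t) = 1"
  proof (rule Suc.IH)
    show "d (Suc N + m) = b" using Suc.prems by simp
    show "d m \<le> t" using Suc.prems(2) monoD[OF assms(1), of m "Suc m"] by simp
    show "t \<le> d (Suc N)" using Suc.prems(3) monoD[OF assms(1), of N "Suc N"] by simp
  qed
  have "(\<Sum>i<N. 1 * bspline d b i (Suc (Suc m)) t) = (\<Sum>i<Suc N. bspline d b i (Suc m) t)"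
    unfolding bs_shift
  proof (intro sum.cong refl)
    fix i assume i: "i \<in> {..<Suc N}"
    show "((if i < N then 1 * WW d m i t else 0) + (if 0 < i then 1 * VV d m i t else 0)) *
         bspline d b i (Suc m) t = bspline d b i (Suc m) t"
    proof (cases "bspline d b i (Suc m) t = 0")
      case False
      note sp = bs_supp[OF assms(1) False]
      have e1: "(if i < N then WW d m i t else 0) + (if 0 < i then VV d m i t else 0) = 1"
      proof -
        consider "0 < i" "i < N" | "i = 0" "0 < N" | "i = N" "0 < N" | "i = 0" "N = 0"
          using i by fastforce
        then show ?thesis
        proof cases
          case 1 then show ?thesis using sp wv_aux[of "d (i + Suc m)" "d i" t] by (simp add: WW_def VV_def)
        next
          case 2 then show ?thesis using sp Suc.prems by (simp add: WW_def VV_def field_simps)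
        next
          case 3 then show ?thesis using sp Suc.prems by (simp add: WW_def VV_def field_simps)
        next
          case 4 then show ?thesis using sp Suc.prems by simp
        qed
      qed
      show ?thesis by (simp only: mult_1 e1)
    qed simp
  qed
  then show ?case using IH by simp
qed

fun HH :: "(nat \<Rightarrow> real) \<Rightarrow> nat \<Rightarrow> nat \<Rightarrow> real" where
  "HH d 0 i = 0"
| "HH d (Suc m) i = d (Suc i) + HH d m (Suc i)"

lemma HH_Suc': "HH d (Suc m) i = HH d m i + d (i + Suc m)"
  by (induction m arbitrary: i) auto

lemma lin_aux: "(D::real) \<noteq> a \<Longrightarrow> (h + D) * ((t - a) / (D - a)) + (a + h) * ((D - t) / (D - a)) = h + t"
proof -
  assume "D \<noteq> a"
  then have n: "D - a \<noteq> 0" by simp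
  have "(h + D) * ((t - a) / (D - a)) + (a + h) * ((D - t) / (D - a)) = ((h + D) * (t - a) + (a + h) * (D - t)) / (D - a)"
    by (simp add: add_divide_distrib)
  also have "(h + D) * (t - a) + (a + h) * (D - t) = (h + t) * (D - a)" by algebra
  finally show ?thesis using n by simp
qed

lemma bs_lin:
  assumes "mono d" "d 0 < b" "d (N + m) = b" "d m \<le> t" "t \<le> d N"
  shows "(\<Sum>i<N. HH d m i * bspline d b i (Suc m) t) = real m * t"
  using assms(3-5)
proof (induction m arbitrary: N)
  case 0
  then show ?case by simp
next
  case (Suc m)
  have h1: "d (Suc N + m) = b" using Suc.prems by simp
  have h2: "d m \<le> t" using Suc.prems(2) monoD[OF assms(1), of m "Suc m"] by simp
  have h3: "t \<le> d (Suc N)" using Suc.prems(3) monoD[OF assms(1), of N "Suc N"] by simp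
  have IH: "(\<Sum>i<Suc N. HH d m i * bspline d b i (Suc m) t) = real m * t"
    by (rule Suc.IH[OF h1 h2 h3])
  have P: "(\<Sum>i<Suc N. bspline d b i (Suc m) t) = 1"
    by (rule bs_part[OF assms(1,2) h1 h2 h3])
  have "(\<Sum>i<N. HH d (Suc m) i * bspline d b i (Suc (Suc m)) t) =
     (\<Sum>i<Suc N. (HH d m i + t) * bspline d b i (Suc m) t)"
    unfolding bs_shift
  proof (intro sum.cong refl)
    fix i assume i: "i \<in> {..<Suc N}"
    show "((if i < N then HH d (Suc m) i * WW d m i t else 0) + (if 0 < i then HH d (Suc m) (i - 1) * VV d m i t else 0)) *
         bspline d b i (Suc m) t = (HH d m i + t) * bspline d b i (Suc m) t"
    proof (cases "bspline d b i (Suc m) t = 0")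
      case False
      note sp = bs_supp[OF assms(1) False]
      have e1: "(if i < N then HH d (Suc m) i * WW d m i t else 0) + (if 0 < i then HH d (Suc m) (i - 1) * VV d m i t else 0) = HH d m i + t"
      proof -
        consider "0 < i" "i < N" | "i = 0" "0 < N" | "i = N" "0 < N" | "i = 0" "N = 0"
          using i by fastforce
        then show ?thesis
        proof cases
          case 1
          have "HH d (Suc m) (i - 1) = d i + HH d m i" using 1 by (cases i) auto
          then show ?thesis using 1 sp lin_aux[of "d (i + Suc m)" "d i" "HH d m i" t]
            by (simp add: WW_def VV_def HH_Suc' del: HH.simps)
        next
          case 2 then show ?thesis using sp Suc.prems by (simp add: WW_def HH_Suc' del: HH.simps)
        next
          case 3
          have "HH d (Suc m) (N - 1) = d N + HH d m N" using 3 by (cases N) auto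
          then show ?thesis using 3 sp Suc.prems by (simp add: VV_def)
        next
          case 4 then show ?thesis using sp Suc.prems by simp
        qed
      qed
      show ?thesis by (simp only: e1)
    qed simp
  qed
  also have "\<dots> = (\<Sum>i<Suc N. HH d m i * bspline d b i (Suc m) t) + t * (\<Sum>i<Suc N. bspline d b i (Suc m) t)"
    by (simp only: sum.distrib sum_distrib_left distrib_right mult.commute)
  also have "\<dots> = real (Suc m) * t" unfolding IH P by (simp add: algebra_simps)
  finally show ?case .
qed

lemma sin_aux: "sin (pi/2 + (2 * real j + 1) * pi) = -1"
proof -
  have e: "pi/2 + (2 * real j + 1) * pi = (pi/2 + pi) + (2 * pi) * of_int (int j)"
    by (simp add: algebra_simps)
  show ?thesis by (simp only: e sin_add sin_int_2pin cos_int_2pin) simp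
qed

lemma conv_periodic_const:
  fixes g :: "real \<Rightarrow> real"
  assumes conv: "\<And>x y c. 0 \<le> c \<Longrightarrow> c \<le> 1 \<Longrightarrow> g (c * x + (1 - c) * y) \<le> c * g x + (1 - c) * g y"
    and per: "\<And>x. g (x + 2 * pi) = g x"
  shows "g y \<le> g x"
proof -
  have pm: "g (z + 2 * pi * real m) = g z" for z m
    by (induction m) (auto simp: algebra_simps per[of "z + 2 * pi * real m" for m, simplified algebra_simps]
       intro: trans[OF _ per])
  obtain m :: nat where m: "\<bar>y - x\<bar> / (2 * pi) < real m" using reals_Archimedean2 by blast
  have mp: "\<bar>y - x\<bar> < 2 * pi * real m" using m pi_gt_zero by (simp add: field_simps)
  define lo where "lo = x - 2 * pi * real m"
  define hi where "hi = x + 2 * pi * real m"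
  have glo: "g lo = g x" using pm[of lo m] by (simp add: lo_def)
  have ghi: "g hi = g x" using pm[of x m] by (simp add: hi_def)
  have lohi: "lo < y" "y < hi" using mp by (auto simp: lo_def hi_def)
  define c where "c = (hi - y) / (hi - lo)"
  have c01: "0 \<le> c" "c \<le> 1" using lohi by (auto simp: c_def divide_simps)
  have cc: "c * (hi - lo) = hi - y" using lohi by (simp add: c_def)
  have "c * lo + (1 - c) * hi = hi - c * (hi - lo)" by (simp add: algebra_simps)
  then have "c * lo + (1 - c) * hi = y" using cc by linarith
  then have "g y \<le> c * g lo + (1 - c) * g hi" using conv[OF c01, of lo hi] by simp
  then show ?thesis by (simp add: glo ghi algebra_simps)
qed

theorem mainTheorem4:
  fixes k l :: nat and \<tau> s :: "nat \<Rightarrow> real" and \<mu>0 \<mu>1 \<mu>2 :: real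
  assumes "4 \<le> k" and "k \<le> l - 1"
    and "\<And>i j. i < j \<Longrightarrow> j < l \<Longrightarrow> \<tau> i < \<tau> j"
    and "0 < \<mu>0" and "0 < \<mu>1" and "0 < \<mu>2"
    and "s \<in> Rn (k + l - 2)"
  shows "\<not> convex_fun (souls k l \<tau> \<mu>0 \<mu>1 \<mu>2) (emd_cost k l \<tau> s)"
proof
  assume cvx: "convex_fun (souls k l \<tau> \<mu>0 \<mu>1 \<mu>2) (emd_cost k l \<tau> s)"
  define n where "n = k + l - 2"
  define d where "d = ext_knot k l \<tau>"
  define b where "b = \<tau> (l - 1)"
  define a0 where "a0 = \<tau> 0"
  define I where "I = {a0..b}"
  have l5: "5 \<le> l" using assms(1,2) by simp
  have tle: "\<tau> i \<le> \<tau> j" if "i \<le> j" "j < l" for i j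
    using assms(3)[of i j] that by (cases "i = j") auto
  have mono: "mono d"
  proof (rule incseq_SucI)
    fix i show "d i \<le> d (Suc i)"
      unfolding d_def ext_knot_def using l5 by (auto intro!: tle)
  qed
  have k1: "k = Suc (k - 1)" using assms(1) by simp
  have dk: "d (k - 1) = a0" unfolding d_def a0_def ext_knot_def by simp
  have dn: "d n = b" unfolding d_def b_def n_def ext_knot_def using l5 by auto
  have dnk: "d (n + (k - 1)) = b" unfolding d_def b_def n_def ext_knot_def using l5 assms(1) by auto
  have ab: "a0 < b" unfolding a0_def b_def using assms(3)[of 0 "l - 1"] l5 by simp
  have d0: "d 0 < b" using ab unfolding d_def a0_def ext_knot_def by simp
  have spl: "spline k l \<tau> x t = (\<Sum>i<n. x i * bspline d b i k t)" for x t
    unfolding spline_def n_def d_def b_def by simp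
  have part: "(\<Sum>i<n. bspline d b i k t) = 1" if "t \<in> I" for t
    using bs_part[OF mono d0 dnk, of t] that k1 dk dn unfolding I_def by simp
  have lin: "(\<Sum>i<n. HH d (k - 1) i * bspline d b i k t) = real (k - 1) * t" if "t \<in> I" for t
    using bs_lin[OF mono d0 dnk, of t] that k1 dk dn unfolding I_def by simp
  define L where "L = b - a0"
  have L0: "0 < L" using ab by (simp add: L_def)
  obtain j :: nat where j: "\<mu>0 * L / pi < real j" using reals_Archimedean2 by blast
  define \<alpha> where "\<alpha> = (2 * real j + 1) * pi / (2 * L)"
  have \<alpha>0: "\<mu>0 \<le> \<alpha>"
  proof -
    have "\<mu>0 * L < real j * pi" using j pi_gt_zero by (simp add: field_simps)
    moreover have "\<mu>0 * (2 * L) = 2 * (\<mu>0 * L)" "(2 * real j + 1) * pi = 2 * (real j * pi) + pi"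
      by (simp_all add: algebra_simps)
    ultimately have "\<mu>0 * (2 * L) < (2 * real j + 1) * pi" using pi_gt_zero by linarith
    then show ?thesis using L0 by (simp add: \<alpha>_def field_simps)
  qed
  have \<alpha>pos: "0 < \<alpha>" using \<alpha>0 assms(4) by simp
  define av where "av = (\<lambda>i. if i < n then 1 else 0::real)"
  define ph where "ph = (\<lambda>\<beta> i. if i < n then \<beta> + \<alpha> / real (k - 1) * HH d (k - 1) i else 0::real)"
  have av_spl: "spline k l \<tau> av t = 1" if "t \<in> I" for t
    using part[OF that] unfolding spl av_def by simp
  have ph_spl: "spline k l \<tau> (ph \<beta>) t = \<beta> + \<alpha> * t" if "t \<in> I" for t \<beta>
  proof -
    have "spline k l \<tau> (ph \<beta>) t = (\<Sum>i<n. \<beta> * bspline d b i k t + \<alpha> / real (k - 1) * (HH d (k - 1) i * bspline d b i k t))"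
      unfolding spl ph_def by (intro sum.cong) (auto simp: algebra_simps)
    also have "\<dots> = \<beta> * (\<Sum>i<n. bspline d b i k t) + \<alpha> / real (k - 1) * (\<Sum>i<n. HH d (k - 1) i * bspline d b i k t)"
      by (simp only: sum.distrib sum_distrib_left)
    also have "\<dots> = \<beta> + \<alpha> * t" using part[OF that] lin[OF that] assms(1) by simp
    finally show ?thesis .
  qed
  define S where "S = spline k l \<tau> s"
  define g where "g = (\<lambda>\<beta>. integral I (\<lambda>t. (S t - cos (\<beta> + \<alpha> * t))\<^sup>2))"
  have mem: "(av, ph \<beta>) \<in> souls k l \<tau> \<mu>0 \<mu>1 \<mu>2" for \<beta>
  proof -
    have "av \<in> Rn n" "ph \<beta> \<in> Rn n" unfolding Rn_def av_def ph_def by auto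
    moreover have W: "\<forall>t\<in>I. (spline k l \<tau> av has_real_derivative 0) (at t within I) \<and>
          (spline k l \<tau> (ph \<beta>) has_real_derivative \<alpha>) (at t within I) \<and>
          ((\<lambda>_. \<alpha>) has_real_derivative 0) (at t within I) \<and>
          0 \<le> spline k l \<tau> av t \<and> \<mu>0 \<le> \<alpha> \<and>
          \<bar>0\<bar> \<le> \<mu>1 * \<bar>\<alpha>\<bar> \<and> \<bar>0::real\<bar> \<le> \<mu>2 * \<bar>\<alpha>\<bar>"
    proof
      fix t assume t: "t \<in> I"
      have "((\<lambda>_. 1::real) has_real_derivative 0) (at t within I)" by simp
      then have D1: "(spline k l \<tau> av has_real_derivative 0) (at t within I)"
        by (rule has_field_derivative_transform_within[where d=1]) (use t av_spl in auto)
      have "((\<lambda>t. \<beta> + \<alpha> * t) has_real_derivative \<alpha>) (at t within I)"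
        by (auto intro!: derivative_eq_intros)
      then have D2: "(spline k l \<tau> (ph \<beta>) has_real_derivative \<alpha>) (at t within I)"
        by (rule has_field_derivative_transform_within[where d=1]) (use t ph_spl in auto)
      show "(spline k l \<tau> av has_real_derivative 0) (at t within I) \<and>
          (spline k l \<tau> (ph \<beta>) has_real_derivative \<alpha>) (at t within I) \<and>
          ((\<lambda>_. \<alpha>) has_real_derivative 0) (at t within I) \<and>
          0 \<le> spline k l \<tau> av t \<and> \<mu>0 \<le> \<alpha> \<and>
          \<bar>0\<bar> \<le> \<mu>1 * \<bar>\<alpha>\<bar> \<and> \<bar>0::real\<bar> \<le> \<mu>2 * \<bar>\<alpha>\<bar>"
        using D1 D2 av_spl[OF t] \<alpha>0 assms(5,6) \<alpha>pos by simp
    qed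
    have "\<exists>dA dP ddP. \<forall>t\<in>I.
          (spline k l \<tau> av has_real_derivative dA t) (at t within I) \<and>
          (spline k l \<tau> (ph \<beta>) has_real_derivative dP t) (at t within I) \<and>
          (dP has_real_derivative ddP t) (at t within I) \<and>
          0 \<le> spline k l \<tau> av t \<and> \<mu>0 \<le> dP t \<and>
          \<bar>dA t\<bar> \<le> \<mu>1 * \<bar>dP t\<bar> \<and> \<bar>ddP t\<bar> \<le> \<mu>2 * \<bar>dP t\<bar>"
      apply (rule exI[where x="\<lambda>_. 0"])
      apply (rule exI[where x="\<lambda>_. \<alpha>"])
      apply (rule exI[where x="\<lambda>_. 0"])
      using W by simp
    moreover have eqs: "{\<tau> 0..\<tau> (l - 1)} = I" "k + l - 2 = n"
      by (simp_all add: I_def a0_def b_def n_def)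
    ultimately show ?thesis unfolding souls_def Let_def eqs by simp
  qed
  have cost: "emd_cost k l \<tau> s (av, ph \<beta>) = g \<beta>" for \<beta>
  proof -
    have eI: "{\<tau> 0..\<tau> (l - 1)} = I" by (simp add: I_def a0_def b_def)
    show ?thesis unfolding emd_cost_def g_def S_def eI
      by (intro integral_cong) (simp add: av_spl ph_spl)
  qed
  have pc: "pcomb c (av, ph x) (av, ph y) = (av, ph (c * x + (1 - c) * y))" for c x y
    unfolding pcomb_def by (auto simp: av_def ph_def algebra_simps fun_eq_iff)
  have gconv: "g (c * x + (1 - c) * y) \<le> c * g x + (1 - c) * g y" if "0 \<le> c" "c \<le> 1" for x y c
  proof -
    have "emd_cost k l \<tau> s (pcomb c (av, ph x) (av, ph y)) \<le> c * emd_cost k l \<tau> s (av, ph x) + (1 - c) * emd_cost k l \<tau> s (av, ph y)"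
      using cvx mem[of x] mem[of y] that unfolding convex_fun_def by blast
    then show ?thesis unfolding pc cost .
  qed
  have gper: "g (x + 2 * pi) = g x" for x
    unfolding g_def
  proof (intro integral_cong)
    fix t
    have "x + 2 * pi + \<alpha> * t = (x + \<alpha> * t) + 2 * pi" by simp
    then show "(S t - cos (x + 2 * pi + \<alpha> * t))\<^sup>2 = (S t - cos (x + \<alpha> * t))\<^sup>2"
      by (simp only: cos_periodic)
  qed
  have geq: "g x = g y" for x y
    using conv_periodic_const[of g, OF gconv gper] by (meson order_antisym)
  define f where "f = (\<lambda>\<beta> t. (S t - cos (\<beta> + \<alpha> * t))\<^sup>2)"
  have gf: "g \<beta> = integral I (f \<beta>)" for \<beta> unfolding g_def f_def by simp
  define M where "M = (\<Sum>i<n. \<bar>s i\<bar> * 2 ^ k)"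
  have Seq: "S = (\<lambda>t. \<Sum>i<n. s i * bspline d b i k t)" unfolding S_def by (simp add: spl fun_eq_iff)
  have Smeas: "S \<in> borel_measurable borel" unfolding Seq
    by (intro borel_measurable_sum borel_measurable_times) (auto intro: bs_meas)
  have Sbd: "\<bar>S t\<bar> \<le> M" for t
  proof -
    have "\<bar>S t\<bar> \<le> (\<Sum>i<n. \<bar>s i * bspline d b i k t\<bar>)" unfolding Seq by (rule sum_abs)
    also have "\<dots> \<le> M" unfolding M_def
      by (intro sum_mono) (auto simp: abs_mult intro!: mult_left_mono bs_bound[OF mono])
    finally show ?thesis .
  qed
  have fint: "f \<beta> integrable_on I" for \<beta>
  proof (rule measurable_bounded_by_integrable_imp_integrable_real)
    have "f \<beta> \<in> borel_measurable borel" unfolding f_def using Smeas by measurable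
    then show "f \<beta> \<in> borel_measurable (lebesgue_on I)"
      by (metis measurable_lborel2 measurable_restrict_space1 measurable_completion)
    show "(\<lambda>_. (M + 1)\<^sup>2) integrable_on I" unfolding I_def by (rule integrable_const_ivl)
    show "I \<in> sets lebesgue" unfolding I_def by simp
    show "\<bar>f \<beta> t\<bar> \<le> (M + 1)\<^sup>2" if "t \<in> I" for t
    proof -
      have "\<bar>S t - cos (\<beta> + \<alpha> * t)\<bar> \<le> M + 1" using Sbd[of t] abs_cos_le_one[of "\<beta> + \<alpha> * t"] by linarith
      then have "\<bar>S t - cos (\<beta> + \<alpha> * t)\<bar>\<^sup>2 \<le> (M + 1)\<^sup>2" by (rule power_mono) simp
      then show ?thesis unfolding f_def by simp
    qed
  qed
  define \<beta>0 where "\<beta>0 = pi / 4 - \<alpha> * a0"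
  have pw: "f \<beta>0 t + f (\<beta>0 + pi) t - f (\<beta>0 + pi / 2) t - f (\<beta>0 + 3 / 2 * pi) t = 2 * cos (2 * (\<beta>0 + \<alpha> * t))" for t
  proof -
    define \<theta> where "\<theta> = \<beta>0 + \<alpha> * t"
    have c1: "cos (\<beta>0 + pi + \<alpha> * t) = - cos \<theta>"
    proof -
      have "\<beta>0 + pi + \<alpha> * t = \<theta> + pi" by (simp add: \<theta>_def)
      then show ?thesis by (simp only: cos_periodic_pi)
    qed
    have c2: "cos (\<beta>0 + pi / 2 + \<alpha> * t) = - sin \<theta>"
    proof -
      have "\<beta>0 + pi / 2 + \<alpha> * t = \<theta> + pi / 2" by (simp add: \<theta>_def)
      then show ?thesis by (simp only: cos_add cos_pi_half sin_pi_half)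
    qed
    have c3: "cos (\<beta>0 + 3 / 2 * pi + \<alpha> * t) = sin \<theta>"
    proof -
      have "\<beta>0 + 3 / 2 * pi + \<alpha> * t = \<theta> + 3 / 2 * pi" by (simp add: \<theta>_def)
      then show ?thesis by (simp only: cos_add cos_3over2_pi sin_3over2_pi)
    qed
    have "f \<beta>0 t + f (\<beta>0 + pi) t - f (\<beta>0 + pi / 2) t - f (\<beta>0 + 3 / 2 * pi) t
        = 2 * ((cos \<theta>)\<^sup>2 - (sin \<theta>)\<^sup>2)"
      unfolding f_def c1 c2 c3 \<theta>_def[symmetric] by (simp add: power2_eq_square algebra_simps)
    also have "\<dots> = 2 * cos (2 * \<theta>)" by (simp add: cos_double)
    finally show ?thesis by (simp add: \<theta>_def)
  qed
  have "integral I (f \<beta>0) + integral I (f (\<beta>0 + pi)) - integral I (f (\<beta>0 + pi / 2)) - integral I (f (\<beta>0 + 3 / 2 * pi))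
      = integral I (\<lambda>t. f \<beta>0 t + f (\<beta>0 + pi) t - f (\<beta>0 + pi / 2) t - f (\<beta>0 + 3 / 2 * pi) t)"
    using fint by (simp add: integral_add integral_diff integrable_add integrable_diff)
  also have "\<dots> = integral I (\<lambda>t. 2 * cos (2 * (\<beta>0 + \<alpha> * t)))" by (simp only: pw)
  also have "\<dots> = sin (2 * (\<beta>0 + \<alpha> * b)) / \<alpha> - sin (2 * (\<beta>0 + \<alpha> * a0)) / \<alpha>"
  proof -
    have "((\<lambda>t. 2 * cos (2 * (\<beta>0 + \<alpha> * t))) has_integral
        (sin (2 * (\<beta>0 + \<alpha> * b)) / \<alpha> - sin (2 * (\<beta>0 + \<alpha> * a0)) / \<alpha>)) {a0..b}"
    proof (rule fundamental_theorem_of_calculus[where f="\<lambda>t. sin (2 * (\<beta>0 + \<alpha> * t)) / \<alpha>"])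
      show "a0 \<le> b" using ab by simp
      fix x assume "x \<in> {a0..b}"
      have "((\<lambda>t. sin (2 * (\<beta>0 + \<alpha> * t)) / \<alpha>) has_real_derivative 2 * cos (2 * (\<beta>0 + \<alpha> * x)))
          (at x within {a0..b})"
        using \<alpha>pos by (auto intro!: derivative_eq_intros simp: field_simps)
      then show "((\<lambda>t. sin (2 * (\<beta>0 + \<alpha> * t)) / \<alpha>) has_vector_derivative 2 * cos (2 * (\<beta>0 + \<alpha> * x)))
          (at x within {a0..b})"
        by (simp add: has_real_derivative_iff_has_vector_derivative)
    qed
    then show ?thesis unfolding I_def by (rule integral_unique)
  qed
  also have "\<dots> = - 2 / \<alpha>"
  proof -
    have e1: "2 * (\<beta>0 + \<alpha> * a0) = pi / 2" by (simp add: \<beta>0_def algebra_simps)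
    have "2 * \<alpha> * L = (2 * real j + 1) * pi" using L0 by (simp add: \<alpha>_def)
    then have e2: "2 * (\<beta>0 + \<alpha> * b) = pi / 2 + (2 * real j + 1) * pi"
      by (simp add: \<beta>0_def L_def algebra_simps)
    show ?thesis unfolding e1 e2 sin_aux by simp
  qed
  finally have "g \<beta>0 + g (\<beta>0 + pi) - g (\<beta>0 + pi / 2) - g (\<beta>0 + 3 / 2 * pi) = - 2 / \<alpha>"
    by (simp add: gf)
  moreover have "g \<beta>0 + g (\<beta>0 + pi) - g (\<beta>0 + pi / 2) - g (\<beta>0 + 3 / 2 * pi) = 0"
    using geq[of "\<beta>0 + pi" \<beta>0] geq[of "\<beta>0 + pi / 2" \<beta>0] geq[of "\<beta>0 + 3 / 2 * pi" \<beta>0] by simp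
  ultimately show False using \<alpha>pos by simp
qed
end
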